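(* Let $\mathcal H$ be a complex Hilbert space of finite dimension $n$ and let $U,V,W$ be unitary operators on $\mathcal H$. Then: (1) (Projective invariance) for every $c\in\mathbb C$ with $|c|=1$, $D(U,cV)=D(cU,V)=D(U,V)$; (2) $0\le D(U,V)\le 1$, and $D(U,V)=0$ if and only if $U=cV$ for some $c\in\mathbb C$ with $|c|=1$; (3) $D(U,V)=D(V,U)$; (4) (Triangle inequality) $D(U,W)\le D(U,V)+D(V,W)$; (5) (Invariance) for every unitary $X$ on $\mathcal H$, $D(XU,XV)=D(UX,VX)=D(U,V)$; (6) $D(U,V)=1$ if and only if there is a unit vector $\alpha\in\mathcal H$ such that $U\alpha$ and $V\alpha$ are orthogonal.
   Context: For unitary operators $U,V$ on a finite-dimensional complex Hilbert space $\mathcal H$ define the u-distance $D(U,V)=\max_{\|\psi\|=1}\big(1-|\langle\psi,U^\dagger V\psi\rangle|^2\big)^{1/2}=\big(1-\min_{\|\psi\|=1}|\langle\psi,U^\dagger V\psi\rangle|^2\big)^{1/2}$. *)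

theory Defs
  imports "HOL-Analysis.Analysis"
begin

text \<open>The Hilbert space is complex^'n for an arbitrary finite index type 'n
  (dimension CARD('n)); operators are 'n x 'n complex matrices acting by *v.\<close>

definition cinner :: "complex ^ 'n \<Rightarrow> complex ^ 'n \<Rightarrow> complex" where
  "cinner x y = (\<Sum>i\<in>UNIV. cnj (x $ i) * y $ i)"

definition cadj :: "complex ^ 'n ^ 'n \<Rightarrow> complex ^ 'n ^ 'n" where
  "cadj A = (\<chi> i j. cnj (A $ j $ i))"

definition cscale :: "complex \<Rightarrow> complex ^ 'n ^ 'n \<Rightarrow> complex ^ 'n ^ 'n" where
  "cscale c A = (\<chi> i j. c * A $ i $ j)"

definition unitary :: "complex ^ 'n ^ 'n \<Rightarrow> bool" where
  "unitary U \<longleftrightarrow> cadj U ** U = mat 1 \<and> U ** cadj U = mat 1"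

definition udist :: "complex ^ 'n ^ 'n \<Rightarrow> complex ^ 'n ^ 'n \<Rightarrow> real" where
  "udist U V = sqrt (1 - (INF \<psi>\<in>{\<psi>. norm \<psi> = 1}. (cmod (cinner \<psi> ((cadj U ** V) *v \<psi>)))\<^sup>2))"

end

theory Submission
  imports Defs
begin

lemma norm_sq_sum: "(norm (x::complex^'n))^2 = (\<Sum>i\<in>UNIV. (cmod (x$i))^2)"
  unfolding norm_vec_def L2_set_def by (simp add: sum_nonneg)

lemma cinner_self: "cinner x x = complex_of_real ((norm x)^2)"
  unfolding norm_sq_sum cinner_def of_real_sum
  by (rule sum.cong) (auto simp: complex_norm_square[symmetric] mult.commute)

lemma cinner_cnj: "cinner y x = cnj (cinner x y)"
  unfolding cinner_def by (simp add: mult.commute)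

lemma cinner_diff_right: "cinner x (y - z) = cinner x y - cinner x z"
  unfolding cinner_def by (simp add: algebra_simps sum_subtractf)
lemma cinner_diff_left: "cinner (y - z) x = cinner y x - cinner z x"
  unfolding cinner_def by (simp add: algebra_simps sum_subtractf)
lemma cinner_add_right: "cinner x (y + z) = cinner x y + cinner x z"
  unfolding cinner_def by (simp add: algebra_simps sum.distrib)
lemma cinner_add_left: "cinner (y + z) x = cinner y x + cinner z x"
  unfolding cinner_def by (simp add: algebra_simps sum.distrib)
lemma cinner_scale_right: "cinner x (c *s y) = c * cinner x y"
  unfolding cinner_def by (simp add: algebra_simps sum_distrib_left)
lemma cinner_scale_left: "cinner (c *s x) y = cnj c * cinner x y"
  unfolding cinner_def by (simp add: algebra_simps sum_distrib_left)

lemma cinner_adj: "cinner (A *v x) y = cinner x (cadj A *v y)"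
proof -
  have "cinner (A *v x) y = (\<Sum>i\<in>UNIV. \<Sum>j\<in>UNIV. cnj (A$i$j) * cnj (x$j) * y$i)"
    unfolding cinner_def matrix_vector_mult_def by (simp add: sum_distrib_right)
  also have "\<dots> = (\<Sum>j\<in>UNIV. \<Sum>i\<in>UNIV. cnj (A$i$j) * cnj (x$j) * y$i)"
    by (rule sum.swap)
  also have "\<dots> = cinner x (cadj A *v y)"
    unfolding cinner_def matrix_vector_mult_def cadj_def
    by (simp add: sum_distrib_left mult.assoc mult.left_commute)
  finally show ?thesis .
qed

lemma norm_sq_cinner: "(norm x)^2 = Re (cinner x x)"
  by (simp add: cinner_self)

lemma pyth:
  assumes "norm (p::complex^'n) = 1"
  shows "(norm (x - b *s p))^2 = (norm x)^2 - (cmod (cinner p x))^2 + (cmod (cinner p x - b))^2"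
proof -
  define c where "c = cinner p x"
  have px: "cinner x p = cnj c" using cinner_cnj c_def by metis
  have pp: "cinner p p = 1" using assms by (simp add: cinner_self)
  have "cinner (x - b *s p) (x - b *s p) = cinner x x - b * cnj c - cnj b * c + cnj b * b"
    by (simp add: cinner_diff_left cinner_diff_right cinner_scale_left cinner_scale_right px pp c_def[symmetric] algebra_simps)
  hence "(norm (x - b *s p))^2 = Re (cinner x x - b * cnj c - cnj b * c + cnj b * b)"
    by (simp add: norm_sq_cinner)
  also have "\<dots> = (norm x)^2 - (cmod c)^2 + (cmod (c - b))^2"
    unfolding cmod_power2 by (simp add: cinner_self power2_eq_square algebra_simps)
  finally show ?thesis by (simp add: c_def)
qed

lemma cs_unit:
  assumes "norm (p::complex^'n) = 1"
  shows "cmod (cinner p x) \<le> norm x"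
proof -
  have "0 \<le> (norm (x - cinner p x *s p))^2" by simp
  hence "(cmod (cinner p x))^2 \<le> (norm x)^2" using pyth[OF assms, of x "cinner p x"] by simp
  thus ?thesis by (simp add: power2_le_iff_abs_le)
qed


lemma cscale_mv: "cscale c A *v x = c *s (A *v x)"
  unfolding cscale_def matrix_vector_mult_def by (simp add: vec_eq_iff sum_distrib_left mult.assoc)

lemma cadj_cadj: "cadj (cadj A) = A"
  unfolding cadj_def by (simp add: vec_eq_iff)

lemma unitary_cadj: "unitary U \<Longrightarrow> unitary (cadj U)"
  unfolding unitary_def by (simp add: cadj_cadj)

lemma unitary_cinner: "unitary U \<Longrightarrow> cinner (U *v x) (U *v y) = cinner x y"
  unfolding unitary_def by (simp add: cinner_adj matrix_vector_mul_assoc)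

lemma unitary_norm: assumes "unitary U" shows "norm (U *v x) = norm x"
proof -
  have "complex_of_real ((norm (U *v x))^2) = complex_of_real ((norm x)^2)"
    using unitary_cinner[OF assms, of x x] by (simp add: cinner_self)
  hence "(norm (U *v x))^2 = (norm x)^2" using of_real_eq_iff by blast
  thus ?thesis by (simp add: power2_eq_iff_nonneg)
qed

lemma cinner_M: "cinner \<psi> ((cadj U ** V) *v \<psi>) = cinner (U *v \<psi>) (V *v \<psi>)"
  by (simp add: matrix_vector_mul_assoc[symmetric] cinner_adj)

definition hh :: "complex ^ 'n ^ 'n \<Rightarrow> complex ^ 'n ^ 'n \<Rightarrow> complex ^ 'n \<Rightarrow> real" where
  "hh U V \<psi> = (cmod (cinner (U *v \<psi>) (V *v \<psi>)))\<^sup>2"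

definition mm :: "complex ^ 'n ^ 'n \<Rightarrow> complex ^ 'n ^ 'n \<Rightarrow> real" where
  "mm U V = (INF \<psi>\<in>{\<psi>. norm \<psi> = 1}. hh U V \<psi>)"

lemma udist_alt: "udist U V = sqrt (1 - mm U V)"
  unfolding udist_def mm_def hh_def cinner_M ..

lemma sphere_ne: "{\<psi>::complex^'n. norm \<psi> = 1} \<noteq> {}"
proof -
  obtain k :: 'n where True by simp
  have "(norm (axis k (1::complex)))^2 = 1"
    unfolding norm_sq_sum axis_def by (simp add: if_distrib[of "\<lambda>x. (cmod x)^2"] cong: if_cong)
  hence "norm (axis k (1::complex)) = 1" by (simp add: power2_eq_1_iff)
  thus ?thesis by blast
qed

lemma hh_ge0: "0 \<le> hh U V \<psi>" unfolding hh_def by simp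

lemma hh_le1: assumes "unitary U" "unitary V" "norm \<psi> = 1" shows "hh U V \<psi> \<le> 1"
proof -
  have "cmod (cinner (U *v \<psi>) (V *v \<psi>)) \<le> 1"
    using cs_unit[of "U *v \<psi>" "V *v \<psi>"] assms unitary_norm by metis
  thus ?thesis unfolding hh_def by (simp add: power_le_one)
qed

lemma bdd_hh: "bdd_below (hh U V ` A)"
  by (rule bdd_belowI[where m=0]) (auto simp: hh_ge0)

lemma mm_le: "norm \<psi> = 1 \<Longrightarrow> mm U V \<le> hh U V \<psi>"
  unfolding mm_def by (rule cINF_lower[OF bdd_hh]) simp

lemma mm_ge: "(\<And>\<psi>. norm \<psi> = 1 \<Longrightarrow> a \<le> hh U V \<psi>) \<Longrightarrow> a \<le> mm U V"
  unfolding mm_def by (rule cINF_greatest[OF sphere_ne]) simp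

lemma mm_ge0: "0 \<le> mm U V" by (rule mm_ge) (simp add: hh_ge0)

lemma mm_le1: assumes "unitary U" "unitary V" shows "mm U V \<le> 1"
proof -
  obtain \<psi> :: "complex^'a" where "norm \<psi> = 1" using sphere_ne by blast
  thus ?thesis using mm_le hh_le1[OF assms] order_trans by blast
qed


lemma norm_smult_c: "norm (a *s (v::complex^'n)) = cmod a * norm v"
proof -
  have "(norm (a *s v))^2 = (cmod a * norm v)^2"
    unfolding norm_sq_sum power_mult_distrib by (simp add: norm_mult power_mult_distrib sum_distrib_left)
  thus ?thesis by (simp add: power2_eq_iff_nonneg)
qed

lemma mv_smult: "M *v (r *s x) = r *s (M *v (x::complex^'n))"
  unfolding matrix_vector_mult_def by (simp add: vec_eq_iff sum_distrib_left algebra_simps)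

definition dd :: "complex^'n \<Rightarrow> complex^'n \<Rightarrow> real" where
  "dd p x = sqrt (1 - (cmod (cinner p x))^2)"

lemma dd_proj: assumes "norm p = 1" "norm x = 1"
  shows "norm (x - cinner p x *s p) = dd p x"
proof -
  have "(norm (x - cinner p x *s p))^2 = 1 - (cmod (cinner p x))^2"
    using pyth[OF assms(1), of x "cinner p x"] assms(2) by simp
  thus ?thesis unfolding dd_def by (metis norm_ge_zero real_sqrt_unique)
qed

lemma dd_le_any: assumes "norm p = 1" "norm x = 1"
  shows "dd p x \<le> norm (x - b *s p)"
proof -
  have "(norm (x - cinner p x *s p))^2 \<le> (norm (x - b *s p))^2"
    using pyth[OF assms(1), of x "cinner p x"] pyth[OF assms(1), of x b] by simp
  hence "norm (x - cinner p x *s p) \<le> norm (x - b *s p)"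
    by (simp add: power2_le_iff_abs_le)
  thus ?thesis using dd_proj[OF assms] by simp
qed

lemma dd_tri: assumes "norm p = 1" "norm q = 1" "norm x = 1"
  shows "dd p x \<le> dd p q + dd q x"
proof -
  define a where "a = cinner q x"
  define b where "b = cinner p q"
  have "x - (a*b) *s p = (x - a *s q) + a *s (q - b *s p)"
    by (simp add: vec_eq_iff algebra_simps)
  hence "norm (x - (a*b) *s p) \<le> norm (x - a *s q) + cmod a * norm (q - b *s p)"
    by (metis norm_triangle_ineq norm_smult_c)
  also have "\<dots> \<le> dd q x + 1 * dd p q"
    using dd_proj[OF assms(1,2)] norm_ge_zero[of "q - b *s p"] dd_proj[OF assms(2,3)] dd_proj[OF assms(1,2)] cs_unit[OF assms(2), of x] assms(3)
    unfolding a_def b_def by (intro add_mono mult_mono) auto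
  finally show ?thesis using dd_le_any[OF assms(1,3), of "a*b"] by simp
qed

lemma udist_tri: assumes "unitary U" "unitary V" "unitary W"
  shows "udist U W \<le> udist U V + udist V W"
proof -
  define s where "s = udist U V + udist V W"
  have s0: "0 \<le> s" unfolding s_def udist_alt
    using mm_le1[OF assms(1,2)] mm_le1[OF assms(2,3)] by simp
  have "1 - s^2 \<le> mm U W"
  proof (rule mm_ge)
    fix \<psi> :: "complex^'a" assume u: "norm \<psi> = 1"
    have n: "norm (U *v \<psi>) = 1" "norm (V *v \<psi>) = 1" "norm (W *v \<psi>) = 1"
      using u unitary_norm assms by metis+
    have e: "dd (X *v \<psi>) (Y *v \<psi>) = sqrt (1 - hh X Y \<psi>)" for X Y
      unfolding dd_def hh_def ..
    have "sqrt (1 - hh U V \<psi>) \<le> udist U V" unfolding udist_alt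
      using mm_le[OF u, of U V] by simp
    moreover have "sqrt (1 - hh V W \<psi>) \<le> udist V W" unfolding udist_alt
      using mm_le[OF u, of V W] by simp
    ultimately have "sqrt (1 - hh U W \<psi>) \<le> s"
      using dd_tri[OF n] unfolding e s_def by linarith
    moreover have h0: "0 \<le> 1 - hh U W \<psi>" using hh_le1[OF assms(1,3) u] by simp
    ultimately have "(sqrt (1 - hh U W \<psi>))^2 \<le> s^2"
      by (intro power_mono) auto
    with h0 show "1 - s^2 \<le> hh U W \<psi>" by simp
  qed
  hence "sqrt (1 - mm U W) \<le> sqrt (s^2)" by (intro real_sqrt_le_mono) simp
  thus ?thesis using s0 unfolding s_def udist_alt by simp
qed


lemma mv_axis: "(M *v axis j (1::complex)) $ i = M$i$j"
  unfolding matrix_vector_mult_def axis_def by (simp add: if_distrib[of "\<lambda>x. M$i$_ * x"] cong: if_cong)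

lemma all_eigen_scalar:
  fixes M :: "complex^'n^'n"
  assumes H: "\<And>\<psi>. \<exists>c. M *v \<psi> = c *s \<psi>"
  shows "\<exists>a. \<forall>\<psi>. M *v \<psi> = a *s \<psi>"
proof -
  have off: "M$i$j = 0" if "i \<noteq> j" for i j
  proof -
    obtain c where "M *v axis j 1 = c *s axis j 1" using H by blast
    hence "(M *v axis j 1) $ i = (c *s axis j 1) $ i" by simp
    moreover have "(c *s axis j (1::complex)) $ i = 0" using that by (simp add: axis_def)
    ultimately show ?thesis by (simp add: mv_axis)
  qed
  have diag: "M$i$i = M$j$j" for i j
  proof (cases "i = j")
    case False
    obtain c where c: "M *v (axis i 1 + axis j 1) = c *s (axis i 1 + axis j 1)" using H by blast
    have "(M *v (axis i 1 + axis j 1)) $ i = M$i$i" "(M *v (axis i 1 + axis j 1)) $ j = M$j$j"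
      using off False by (simp_all add: matrix_vector_right_distrib mv_axis)
    moreover have "(c *s (axis i 1 + axis j 1)) $ i = c" "(c *s (axis i 1 + axis j 1)) $ j = c"
      using False by (simp_all add: axis_def)
    ultimately show ?thesis using c by metis
  qed simp
  obtain k :: 'n where True by simp
  have "M *v \<psi> = M$k$k *s \<psi>" for \<psi>
  proof -
    have "(M *v \<psi>) $ i = M$k$k * \<psi>$i" for i
    proof -
      have "(M *v \<psi>) $ i = (\<Sum>j\<in>UNIV. M$i$j * \<psi>$j)"
        by (simp add: matrix_vector_mult_def)
      also have "\<dots> = (\<Sum>j\<in>UNIV. if j = i then M$k$k * \<psi>$j else 0)"
        by (rule sum.cong) (use off diag[of i k] in auto)
      finally have "(M *v \<psi>) $ i = (\<Sum>j\<in>UNIV. if j = i then M$k$k * \<psi>$j else 0)" .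
      thus ?thesis by simp
    qed
    thus ?thesis by (simp add: vec_eq_iff)
  qed
  thus ?thesis by blast
qed

lemma hh_cont: "continuous_on A (hh U V)"
  unfolding hh_def[abs_def] cinner_def
  by (intro continuous_intros)


lemma hh_cscale_r: "cmod c = 1 \<Longrightarrow> hh U (cscale c V) \<psi> = hh U V \<psi>"
  unfolding hh_def by (simp add: cscale_mv cinner_scale_right norm_mult)
lemma hh_cscale_l: "cmod c = 1 \<Longrightarrow> hh (cscale c U) V \<psi> = hh U V \<psi>"
  unfolding hh_def by (simp add: cscale_mv cinner_scale_left norm_mult)
lemma hh_sym: "hh V U \<psi> = hh U V \<psi>"
  unfolding hh_def by (metis cinner_cnj complex_mod_cnj)
lemma hh_left: "unitary X \<Longrightarrow> hh (X ** U) (X ** V) \<psi> = hh U V \<psi>"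
  unfolding hh_def by (simp add: matrix_vector_mul_assoc[symmetric] unitary_cinner)
lemma hh_right: "hh (U ** X) (V ** X) \<psi> = hh U V (X *v \<psi>)"
  unfolding hh_def by (simp add: matrix_vector_mul_assoc[symmetric])

lemma mm_right: assumes "unitary X" shows "mm (U ** X) (V ** X) = mm U V"
proof (rule antisym)
  show "mm U V \<le> mm (U ** X) (V ** X)"
    by (rule mm_ge) (simp add: hh_right mm_le unitary_norm[OF assms])
  show "mm (U ** X) (V ** X) \<le> mm U V"
  proof (rule mm_ge)
    fix \<psi> :: "complex^'a" assume u: "norm \<psi> = 1"
    have "X *v (cadj X *v \<psi>) = \<psi>" using assms
      by (simp add: unitary_def matrix_vector_mul_assoc)
    moreover have "norm (cadj X *v \<psi>) = 1" using u unitary_norm[OF unitary_cadj[OF assms]] by simp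
    ultimately show "mm (U ** X) (V ** X) \<le> hh U V \<psi>"
      using mm_le[of "cadj X *v \<psi>" "U ** X" "V ** X"] hh_right by metis
  qed
qed

lemma hh_one_scalar:
  assumes U: "unitary U" and V: "unitary V" and H: "\<And>\<psi>. norm \<psi> = 1 \<Longrightarrow> hh U V \<psi> = 1"
  shows "\<exists>c. cmod c = 1 \<and> U = cscale c V"
proof -
  define M where "M = cadj U ** V"
  have unit: "M *v \<psi> = cinner \<psi> (M *v \<psi>) *s \<psi>" if u: "norm \<psi> = 1" for \<psi>
  proof -
    define c where "c = cinner \<psi> (M *v \<psi>)"
    have "cmod c = 1" using H[OF u] unfolding c_def M_def cinner_M hh_def
      by (simp add: power2_eq_1_iff) (smt (verit) norm_ge_zero)
    moreover have "norm (M *v \<psi>) = 1" unfolding M_def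
      using u unitary_norm[OF unitary_cadj[OF U]] unitary_norm[OF V]
      by (simp add: matrix_vector_mul_assoc[symmetric])
    ultimately have "(norm (M *v \<psi> - c *s \<psi>))^2 = 0"
      using pyth[OF u, of "M *v \<psi>" c] unfolding c_def by simp
    thus ?thesis unfolding c_def by simp
  qed
  have "\<exists>c. M *v \<psi> = c *s \<psi>" for \<psi>
  proof (cases "\<psi> = 0")
    case True thus ?thesis by (auto simp: vec_eq_iff matrix_vector_mult_def)
  next
    case False
    define r where "r = complex_of_real (norm \<psi>)"
    define \<phi> where "\<phi> = inverse r *s \<psi>"
    have r0: "r \<noteq> 0" using False r_def by simp
    have n: "norm \<phi> = 1" unfolding \<phi>_def r_def norm_smult_c using False
      by (simp add: norm_inverse)
    have ps: "\<psi> = r *s \<phi>" unfolding \<phi>_def using r0 by (simp add: vector_smult_assoc)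
    have "M *v \<psi> = r *s (cinner \<phi> (M *v \<phi>) *s \<phi>)" using unit[OF n] ps by (metis mv_smult)
    also have "\<dots> = cinner \<phi> (M *v \<phi>) *s \<psi>" using ps by (simp add: vector_smult_assoc mult.commute)
    finally show ?thesis by blast
  qed
  then obtain a where a: "\<And>\<psi>. M *v \<psi> = a *s \<psi>" using all_eigen_scalar by metis
  have "V *v \<psi> = cscale a U *v \<psi>" for \<psi>
  proof -
    have "V *v \<psi> = U *v (M *v \<psi>)" using U unfolding M_def unitary_def
      by (simp add: matrix_vector_mul_assoc matrix_mul_assoc)
    thus ?thesis by (simp add: a mv_smult cscale_mv)
  qed
  hence VU: "V = cscale a U" by (simp add: matrix_eq)
  obtain \<psi> :: "complex^'a" where u: "norm \<psi> = 1" using sphere_ne by blast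
  have "norm (V *v \<psi>) = cmod a * norm (U *v \<psi>)" unfolding VU cscale_mv norm_smult_c ..
  hence a1: "cmod a = 1" using u unitary_norm[OF U] unitary_norm[OF V, of \<psi>] by simp
  have ca: "cnj a * a = 1" using a1 complex_norm_square[of a] by (simp add: mult.commute)
  have "cscale (cnj a) V = U" unfolding VU cscale_def
    by (simp add: vec_eq_iff mult.assoc[symmetric] ca)
  thus ?thesis using a1 by (metis complex_mod_cnj)
qed


theorem theorem3:
  fixes U V W :: "complex ^ 'n ^ 'n"
  assumes "unitary U" and "unitary V" and "unitary W"
  shows "(\<forall>c. cmod c = 1 \<longrightarrow> udist U (cscale c V) = udist U V \<and> udist (cscale c U) V = udist U V)
    \<and> (0 \<le> udist U V \<and> udist U V \<le> 1
       \<and> (udist U V = 0 \<longleftrightarrow> (\<exists>c. cmod c = 1 \<and> U = cscale c V)))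
    \<and> udist U V = udist V U
    \<and> udist U W \<le> udist U V + udist V W
    \<and> (\<forall>X. unitary X \<longrightarrow> udist (X ** U) (X ** V) = udist U V \<and> udist (U ** X) (V ** X) = udist U V)
    \<and> (udist U V = 1 \<longleftrightarrow> (\<exists>\<alpha>. norm \<alpha> = 1 \<and> cinner (U *v \<alpha>) (V *v \<alpha>) = 0))"
proof (intro conjI allI impI)
  have m0: "0 \<le> mm U V" and m1: "mm U V \<le> 1" using mm_ge0 mm_le1 assms by auto
  fix c :: complex assume c: "cmod c = 1"
  show "udist U (cscale c V) = udist U V" "udist (cscale c U) V = udist U V"
    unfolding udist_alt mm_def by (simp_all add: hh_cscale_r hh_cscale_l c)
next
  show "0 \<le> udist U V" "udist U V \<le> 1" unfolding udist_alt
    using mm_ge0[of U V] mm_le1[OF assms(1,2)] by auto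
next
  show "udist U V = 0 \<longleftrightarrow> (\<exists>c. cmod c = 1 \<and> U = cscale c V)"
  proof
    assume "udist U V = 0"
    hence mm1: "mm U V = 1" unfolding udist_alt using mm_le1[OF assms(1,2)] by simp
    have "hh U V \<psi> = 1" if "norm \<psi> = 1" for \<psi>
      using mm_le[OF that, of U V] hh_le1[OF assms(1,2) that] mm1 by simp
    thus "\<exists>c. cmod c = 1 \<and> U = cscale c V" using hh_one_scalar assms by blast
  next
    assume "\<exists>c. cmod c = 1 \<and> U = cscale c V"
    then obtain c where c: "cmod c = 1" "U = cscale c V" by blast
    have "1 \<le> mm U V"
    proof (rule mm_ge)
      fix \<psi> :: "complex^'n" assume u: "norm \<psi> = 1"
      have "hh V V \<psi> = 1" unfolding hh_def cinner_self
        using unitary_norm[OF assms(2), of \<psi>] u by simp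
      thus "1 \<le> hh U V \<psi>" using c hh_cscale_l[OF c(1), of V V \<psi>] by simp
    qed
    thus "udist U V = 0" unfolding udist_alt using mm_le1[OF assms(1,2)] by simp
  qed
next
  show "udist U V = udist V U" unfolding udist_alt mm_def by (simp add: hh_sym)
next
  show "udist U W \<le> udist U V + udist V W" using udist_tri assms by blast
next
  fix X :: "complex^'n^'n" assume X: "unitary X"
  show "udist (X ** U) (X ** V) = udist U V" unfolding udist_alt mm_def by (simp add: hh_left X)
  show "udist (U ** X) (V ** X) = udist U V" unfolding udist_alt by (simp add: mm_right X)
next
  show "udist U V = 1 \<longleftrightarrow> (\<exists>\<alpha>. norm \<alpha> = 1 \<and> cinner (U *v \<alpha>) (V *v \<alpha>) = 0)"
  proof
    assume "udist U V = 1"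
    hence mm0: "mm U V = 0" unfolding udist_alt using mm_ge0[of U V] by simp
    have "\<exists>x\<in>sphere 0 1. \<forall>y\<in>sphere 0 1. hh U V x \<le> hh U V y"
      by (rule continuous_attains_inf) (use sphere_ne in \<open>auto simp: hh_cont\<close>)
    then obtain x :: "complex^'n" where x: "norm x = 1" and mn: "\<And>y. norm y = 1 \<Longrightarrow> hh U V x \<le> hh U V y"
      by auto
    have "hh U V x \<le> mm U V" by (rule mm_ge) (rule mn)
    hence "hh U V x = 0" using mm0 hh_ge0[of U V x] by simp
    thus "\<exists>\<alpha>. norm \<alpha> = 1 \<and> cinner (U *v \<alpha>) (V *v \<alpha>) = 0" using x unfolding hh_def by auto
  next
    assume "\<exists>\<alpha>. norm \<alpha> = 1 \<and> cinner (U *v \<alpha>) (V *v \<alpha>) = 0"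
    then obtain \<alpha> where "norm \<alpha> = 1" "cinner (U *v \<alpha>) (V *v \<alpha>) = 0" by blast
    hence "mm U V \<le> 0" using mm_le[of \<alpha> U V] unfolding hh_def by simp
    hence "mm U V = 0" using mm_ge0[of U V] by simp
    thus "udist U V = 1" unfolding udist_alt by simp
  qed
qed

end
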